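(* For a strictly positive probability vector $\pi=(\pi_1,\pi_2,\pi_3,\pi_4)$ let $$\mathrm{HKY}_\pi^+=\left\{\begin{pmatrix}\ast & \pi_2\kappa & \lambda\pi_3 & \lambda\pi_4\\ \pi_1\kappa & \ast & \lambda\pi_3 & \lambda\pi_4\\ \lambda\pi_1 & \lambda\pi_2 & \ast & \pi_4\kappa\\ \lambda\pi_1 & \lambda\pi_2 & \pi_3\kappa & \ast\end{pmatrix}:\kappa,\lambda\ge 0\right\},$$ where each $\ast$ denotes the diagonal entry making the row sum zero. If $\pi_1+\pi_2\neq\pi_3+\pi_4$, then $\operatorname{span}_{\mathbb{R}}(\mathrm{HKY}_\pi^+)$ is not closed under $A\odot B=AB+BA$ (so $\mathrm{HKY}_\pi^+$ is not uniformization stable). Consequently $\mathrm{HKY}^+:=\bigcup_\pi\mathrm{HKY}_\pi^+$ (union over all strictly positive probability vectors) is not uniformization stable.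
   Context: A strictly positive probability vector has all entries positive and summing to 1. A set $\mathcal{M}$ of $4\times4$ rate matrices (zero row sums, nonnegative off-diagonal entries) is uniformization stable if for every $Q\in\mathcal{M}$ and $t\ge0$ there is $\hat Q\in\mathcal{M}$ with $e^{Qt}-I_4=\hat Q$. *)

theory Defs
  imports "HOL-Analysis.Analysis" "HOL-Library.Numeral_Type"
begin

text \<open>4x4 real matrices are indexed by the type 4 = {0,1,2,3};
  paper index k (1..4) corresponds to index k-1 here.\<close>

type_synonym mat4 = "real^4^4"

primrec mpow :: "mat4 \<Rightarrow> nat \<Rightarrow> mat4" where
  "mpow Q 0 = mat 1"
| "mpow Q (Suc n) = Q ** mpow Q n"

definition mexp :: "mat4 \<Rightarrow> mat4" where
  "mexp Q = (\<Sum>k. (1 / fact k) *\<^sub>R mpow Q k)"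

definition rate_matrix :: "mat4 \<Rightarrow> bool" where
  "rate_matrix Q \<longleftrightarrow> (\<forall>i. (\<Sum>j\<in>UNIV. Q$i$j) = 0) \<and> (\<forall>i j. i \<noteq> j \<longrightarrow> Q$i$j \<ge> 0)"

definition pos_prob_vec :: "real^4 \<Rightarrow> bool" where
  "pos_prob_vec p \<longleftrightarrow> (\<forall>i. p$i > 0) \<and> (\<Sum>i\<in>UNIV. p$i) = 1"

definition unif_stable :: "mat4 set \<Rightarrow> bool" where
  "unif_stable M \<longleftrightarrow>
     (\<forall>Q\<in>M. \<forall>t::real. t \<ge> 0 \<longrightarrow> (\<exists>Q'\<in>M. mexp (t *\<^sub>R Q) - mat 1 = Q'))"

definition hky_off :: "real^4 \<Rightarrow> real \<Rightarrow> real \<Rightarrow> 4 \<Rightarrow> 4 \<Rightarrow> real" where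
  "hky_off p kap lam i j =
     (if i = j then 0
      else if (i \<in> {0,1}) = (j \<in> {0,1}) then kap * p$j else lam * p$j)"

definition hky_mat :: "real^4 \<Rightarrow> real \<Rightarrow> real \<Rightarrow> mat4" where
  "hky_mat p kap lam = (\<chi> i j. if i = j then - (\<Sum>k\<in>UNIV - {i}. hky_off p kap lam i k)
                                else hky_off p kap lam i j)"

definition HKY_plus :: "real^4 \<Rightarrow> mat4 set" where
  "HKY_plus p = {hky_mat p kap lam | kap lam. kap \<ge> 0 \<and> lam \<ge> 0}"

definition HKY_plus_all :: "mat4 set" where
  "HKY_plus_all = (\<Union>p\<in>{p. pos_prob_vec p}. HKY_plus p)"

definition closed_odot :: "mat4 set \<Rightarrow> bool" where
  "closed_odot S \<longleftrightarrow> (\<forall>A\<in>S. \<forall>B\<in>S. A ** B + B ** A \<in> S)"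

end

theory Submission imports Defs begin
lemma exh4: fixes x :: 4 shows "x = 0 \<or> x = 1 \<or> x = 2 \<or> x = 3"
proof (induct x)
  case (of_int z)
  then have "z = 0 \<or> z = 1 \<or> z = 2 \<or> z = 3" by fastforce
  then show ?case by auto
qed
lemma UNIV4: "(UNIV::4 set) = {0,1,2,3}"
  using exh4 by auto
lemma neq: "(0::4)\<noteq>1" "(0::4)\<noteq>2" "(0::4)\<noteq>3" "(1::4)\<noteq>2" "(1::4)\<noteq>3" "(2::4)\<noteq>3"
  "(1::4)\<noteq>0" "(2::4)\<noteq>0" "(3::4)\<noteq>0" "(2::4)\<noteq>1" "(3::4)\<noteq>1" "(3::4)\<noteq>2"
  by simp_all
lemma sum4: "(\<Sum>i\<in>(UNIV::4 set). f i) = f 0 + f 1 + f 2 + f 3"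
  unfolding UNIV4 using neq by (simp add: add.assoc)
lemma sumdiff: "(\<Sum>k\<in>UNIV - {i::4}. (f k::real)) = f 0 + f 1 + f 2 + f 3 - f i"
proof -
  have "sum f UNIV = f i + sum f (UNIV - {i})" by (rule sum.remove) auto
  thus ?thesis unfolding sum4 by simp
qed
lemma mat4_eqI:
  fixes A B :: mat4
  assumes "\<And>i j. i \<in> {0,1,2,3} \<Longrightarrow> j \<in> {0,1,2,3} \<Longrightarrow> A$i$j = B$i$j"
  shows "A = B"
proof -
  have "\<And>i j. A$i$j = B$i$j" using assms exh4 by blast
  thus ?thesis by (simp add: vec_eq_iff)
qed
lemma hky_e:
  "hky_mat p k l $0$0 = -(k*p$1 + l*p$2 + l*p$3)"
  "hky_mat p k l $0$1 = k*p$1" "hky_mat p k l $0$2 = l*p$2" "hky_mat p k l $0$3 = l*p$3"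
  "hky_mat p k l $1$0 = k*p$0" "hky_mat p k l $1$1 = -(k*p$0 + l*p$2 + l*p$3)"
  "hky_mat p k l $1$2 = l*p$2" "hky_mat p k l $1$3 = l*p$3"
  "hky_mat p k l $2$0 = l*p$0" "hky_mat p k l $2$1 = l*p$1"
  "hky_mat p k l $2$2 = -(l*p$0 + l*p$1 + k*p$3)" "hky_mat p k l $2$3 = k*p$3"
  "hky_mat p k l $3$0 = l*p$0" "hky_mat p k l $3$1 = l*p$1"
  "hky_mat p k l $3$2 = k*p$2" "hky_mat p k l $3$3 = -(l*p$0 + l*p$1 + k*p$2)"
  by (simp_all add: hky_mat_def hky_off_def sumdiff neq)
lemma mm4: "((A::mat4) ** B) $ i $ j = A$i$0 * B$0$j + A$i$1 * B$1$j + A$i$2 * B$2$j + A$i$3 * B$3$j"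
  by (simp add: matrix_matrix_mult_def sum4)
definition Pm :: "real^4 \<Rightarrow> mat4" where "Pm p = (\<chi> i j. p$j)"
definition X1m :: "real^4 \<Rightarrow> mat4" where
  "X1m p = (\<chi> i j. if i \<in> {0,1} \<and> j \<in> {0,1} then (if i = j then 1 else 0) - p$j / (p$0+p$1) else 0)"
definition X2m :: "real^4 \<Rightarrow> mat4" where
  "X2m p = (\<chi> i j. if i \<in> {2,3} \<and> j \<in> {2,3} then (if i = j then 1 else 0) - p$j / (p$2+p$3) else 0)"
definition Ym :: "real^4 \<Rightarrow> mat4" where
  "Ym p = (\<chi> i j. (if (i \<in> {0,1}) = (j \<in> {0,1}) then p$j / (if j \<in> {0,1} then p$0+p$1 else p$2+p$3) else 0) - p$j)"
definition Fm :: "real^4 \<Rightarrow> real \<Rightarrow> real \<Rightarrow> real \<Rightarrow> real \<Rightarrow> mat4" where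
  "Fm p w x y z = w *\<^sub>R Pm p + x *\<^sub>R Ym p + y *\<^sub>R X1m p + z *\<^sub>R X2m p"

lemmas mdefs = Pm_def X1m_def X2m_def Ym_def

lemma Fm_one:
  assumes "p$0+p$1 > 0" "p$2+p$3 > 0"
  shows "Fm p 1 1 1 1 = mat 1"
proof -
  obtain s where s: "s = p$0+p$1" by blast
  obtain t where t: "t = p$2+p$3" by blast
  have e1: "p$3 = t - p$2" "p$1 = s - p$0" using s t assms by auto
  have t0: "t > 0" "s > 0" using s t assms by auto
  show ?thesis
  apply (rule mat4_eqI)
  using t0 by (elim insertE emptyE; simp add: Fm_def mdefs mat_def neq e1 field_simps)
qed

lemma mm_scaleR: "(A::mat4) ** (c *\<^sub>R B) = c *\<^sub>R (A ** B)"
  by (simp add: matrix_matrix_mult_def vec_eq_iff sum_distrib_left algebra_simps)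

lemma QP: "hky_mat p 2 1 ** Pm p = 0"
  apply (rule mat4_eqI)
  apply (elim insertE emptyE; simp add: mm4 hky_e Pm_def)
  by (simp_all add: algebra_simps)

lemma QX1: assumes "p$0+p$1 > 0" "p$0+p$1+p$2+p$3 = 1"
  shows "hky_mat p 2 1 ** X1m p = (-(1+(p$0+p$1))) *\<^sub>R X1m p"
proof -
  obtain s where s: "s = p$0+p$1" by blast
  have e1: "p$1 = s - p$0" "p$3 = 1 - s - p$2" using s assms by auto
  have s0: "s > 0" using s assms by simp
  show ?thesis
  apply (rule mat4_eqI)
  using s0 by (elim insertE emptyE; simp add: mm4 hky_e X1m_def neq e1 field_simps)
qed

lemma QX2: assumes "p$2+p$3 > 0" "p$0+p$1+p$2+p$3 = 1"
  shows "hky_mat p 2 1 ** X2m p = (-(1+(p$2+p$3))) *\<^sub>R X2m p"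
proof -
  obtain t where t: "t = p$2+p$3" by blast
  have e1: "p$3 = t - p$2" "p$1 = 1 - t - p$0" using t assms by auto
  have t0: "t > 0" using t assms by simp
  show ?thesis
  apply (rule mat4_eqI)
  using t0 by (elim insertE emptyE; simp add: mm4 hky_e X2m_def neq e1 field_simps)
qed

lemma Ydec: assumes "p$0+p$1 > 0" "p$2+p$3 > 0"
  shows "Ym p = mat 1 - X1m p - X2m p - Pm p"
proof -
  obtain s where s: "s = p$0+p$1" by blast
  obtain t where t: "t = p$2+p$3" by blast
  have e1: "p$3 = t - p$2" "p$1 = s - p$0" using s t assms by auto
  have t0: "t > 0" "s > 0" using s t assms by auto
  show ?thesis
  apply (rule mat4_eqI)
  using t0 by (elim insertE emptyE; simp add: mdefs mat_def neq e1 field_simps)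
qed

lemma Qdec: assumes "p$0+p$1 > 0" "p$2+p$3 > 0" "p$0+p$1+p$2+p$3 = 1"
  shows "hky_mat p 2 1 = Pm p - mat 1 - (p$0+p$1) *\<^sub>R X1m p - (p$2+p$3) *\<^sub>R X2m p"
proof -
  obtain s where s: "s = p$0+p$1" by blast
  obtain t where t: "t = p$2+p$3" by blast
  have e1: "p$3 = t - p$2" "p$1 = s - p$0" using s t assms by auto
  have t0: "t > 0" "s > 0" "s + t = 1" using s t assms by auto
  show ?thesis
  apply (rule mat4_eqI)
  using t0 apply (elim insertE emptyE; simp add: hky_e mdefs mat_def neq e1 field_simps)
  using t0 by (simp_all add: distrib_left[symmetric] distrib_right[symmetric])
qed

lemma mm_diff: "(A::mat4) ** (B - C) = A ** B - A ** C"
  by (simp add: matrix_matrix_mult_def vec_eq_iff sum_subtractf algebra_simps)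

lemma QY: assumes "p$0+p$1 > 0" "p$2+p$3 > 0" "p$0+p$1+p$2+p$3 = 1"
  shows "hky_mat p 2 1 ** Ym p = - Ym p"
proof -
  have "hky_mat p 2 1 ** Ym p = hky_mat p 2 1 - hky_mat p 2 1 ** X1m p - hky_mat p 2 1 ** X2m p - hky_mat p 2 1 ** Pm p"
    by (simp add: Ydec[OF assms(1,2)] mm_diff)
  also have "\<dots> = hky_mat p 2 1 + (1+(p$0+p$1)) *\<^sub>R X1m p + (1+(p$2+p$3)) *\<^sub>R X2m p"
    using QX1[of p] QX2[of p] QP[of p] assms by (simp add: algebra_simps scaleR_diff_left scaleR_add_left)
  also have "\<dots> = - Ym p"
    unfolding Ydec[OF assms(1,2)] Qdec[OF assms] by (simp add: algebra_simps)
  finally show ?thesis .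
qed

lemma Fm_step:
  assumes "p$0+p$1 > 0" "p$2+p$3 > 0" "p$0+p$1+p$2+p$3 = 1"
  shows "hky_mat p 2 1 ** Fm p w x y z = Fm p 0 (-x) (-(1+(p$0+p$1))*y) (-(1+(p$2+p$3))*z)"
  unfolding Fm_def using QP[of p] QY[OF assms] QX1[of p] QX2[of p] assms
  by (simp add: matrix_add_ldistrib mm_scaleR mult.commute)
lemma mpow_Q:
  assumes "p$0+p$1 > 0" "p$2+p$3 > 0" "p$0+p$1+p$2+p$3 = 1"
  shows "mpow (hky_mat p 2 1) k = Fm p (0^k) ((-1)^k) ((-(1+(p$0+p$1)))^k) ((-(1+(p$2+p$3)))^k)"
proof (induction k)
  case 0
  then show ?case using Fm_one[OF assms(1,2)] by simp
next
  case (Suc k)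
  have "mpow (hky_mat p 2 1) (Suc k) = Fm p 0 (- ((-1)^k)) (-(1+(p$0+p$1)) * (-(1+(p$0+p$1)))^k) (-(1+(p$2+p$3)) * (-(1+(p$2+p$3)))^k)"
    by (simp only: mpow.simps Suc.IH Fm_step[OF assms])
  also have "\<dots> = Fm p (0^Suc k) ((-1)^Suc k) ((-(1+(p$0+p$1)))^Suc k) ((-(1+(p$2+p$3)))^Suc k)"
    by (simp only: power_Suc power_0_Suc) simp
  finally show ?case .
qed

lemma exp_series: "(\<lambda>k. (1 / fact k) * (x::real) ^ k) sums exp x"
  using exp_converges[of x] by (simp add: divide_inverse mult.commute)

lemma mexp_Q:
  assumes "p$0+p$1 > 0" "p$2+p$3 > 0" "p$0+p$1+p$2+p$3 = 1"
  shows "mexp (1 *\<^sub>R hky_mat p 2 1) = Fm p 1 (exp (-1)) (exp (-(1+(p$0+p$1)))) (exp (-(1+(p$2+p$3))))"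
proof -
  let ?s = "p$0+p$1" and ?t = "p$2+p$3"
  have e0: "(\<lambda>k. (1 / fact k) * (0::real) ^ k) sums 1" using exp_series[of 0] by simp
  have "(\<lambda>k. ((1 / fact k) * 0 ^ k) *\<^sub>R Pm p + ((1 / fact k) * (-1) ^ k) *\<^sub>R Ym p
      + ((1 / fact k) * (-(1+?s)) ^ k) *\<^sub>R X1m p + ((1 / fact k) * (-(1+?t)) ^ k) *\<^sub>R X2m p)
     sums (1 *\<^sub>R Pm p + exp (-1) *\<^sub>R Ym p + exp (-(1+?s)) *\<^sub>R X1m p + exp (-(1+?t)) *\<^sub>R X2m p)"
    by (intro sums_add sums_scaleR_left e0 exp_series)
  moreover have "(\<lambda>k. (1 / fact k) *\<^sub>R mpow (1 *\<^sub>R hky_mat p 2 1) k) = 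
     (\<lambda>k. ((1 / fact k) * 0 ^ k) *\<^sub>R Pm p + ((1 / fact k) * (-1) ^ k) *\<^sub>R Ym p
      + ((1 / fact k) * (-(1+?s)) ^ k) *\<^sub>R X1m p + ((1 / fact k) * (-(1+?t)) ^ k) *\<^sub>R X2m p)"
    by (rule ext, simp only: scaleR_one mpow_Q[OF assms] Fm_def scaleR_add_right scaleR_scaleR)
  ultimately have "(\<lambda>k. (1 / fact k) *\<^sub>R mpow (1 *\<^sub>R hky_mat p 2 1) k) sums Fm p 1 (exp (-1)) (exp (-(1+?s))) (exp (-(1+?t)))"
    unfolding Fm_def by (simp only:)
  thus ?thesis unfolding mexp_def by (rule sums_unique[symmetric])
qed


lemma exp_strict: assumes "(x::real) > 0" shows "1 + x < exp x"
proof -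
  have e: "exp x = exp (x/2) * exp (x/2)" by (simp flip: exp_add)
  have a: "1 + x/2 \<le> exp (x/2)" by (rule exp_ge_add_one_self)
  have b: "0 \<le> 1 + x/2" using assms by simp
  have "(1+x/2)*(1+x/2) \<le> exp (x/2) * exp (x/2)"
    by (rule mult_mono[OF a a]) (simp_all add: b)
  hence c: "(1+x/2)*(1+x/2) \<le> exp x" using e by simp
  have d: "(1+x/2)*(1+x/2) = 1 + x + (x*x)/4" by (simp add: field_simps)
  have "0 < x*x" using assms by simp
  thus ?thesis using c d by linarith
qed

lemma g_strict:
  assumes "0 < x" "x < y"
  shows "(1 - exp (-y)) / y < (1 - exp (-x)) / (x::real)"
proof -
  define \<psi> where "\<psi> u = x * (1 - exp (-u)) - (1 - exp (-x)) * u" for u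
  have "\<psi> x > \<psi> y"
  proof (rule DERIV_neg_imp_decreasing[OF assms(2)])
    fix u assume u: "x \<le> u" "u \<le> y"
    have d: "DERIV \<psi> u :> x * exp (-u) - (1 - exp (-x))"
    proof -
      have d1: "DERIV (\<lambda>u. exp (-u)) u :> exp (-u) * (-1)"
        using DERIV_chain2[OF DERIV_exp DERIV_minus[OF DERIV_ident]] by simp
      have d2: "DERIV (\<lambda>u. 1 - exp (-u)) u :> 0 - exp (-u) * (-1)" by (rule DERIV_diff[OF DERIV_const d1])
      have d3: "DERIV (\<lambda>u. x * (1 - exp (-u))) u :> x * (0 - exp (-u) * (-1))" by (rule DERIV_cmult[OF d2])
      have d4: "DERIV (\<lambda>u. (1 - exp (-x)) * u) u :> (1 - exp (-x)) * 1" by (rule DERIV_cmult[OF DERIV_ident])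
      have "DERIV (\<lambda>u. x * (1 - exp (-u)) - (1 - exp (-x)) * u) u :> x * (0 - exp (-u) * (-1)) - (1 - exp (-x)) * 1"
        by (rule DERIV_diff[OF d3 d4])
      thus ?thesis unfolding \<psi>_def by simp
    qed
    have "exp (-u) \<le> exp (-x)" using u by simp
    hence "x * exp (-u) \<le> x * exp (-x)" using assms by (simp add: mult_left_mono)
    moreover have "x * exp (-x) < 1 - exp (-x)"
    proof -
      have "1 + x < exp x" by (rule exp_strict[OF assms(1)])
      hence "(1 + x) * exp (-x) < exp x * exp (-x)" by (simp add: mult_strict_right_mono)
      moreover have "exp x * exp (-x) = 1" by (simp flip: exp_add)
      ultimately show ?thesis by (simp add: algebra_simps)
    qed
    ultimately have "x * exp (-u) - (1 - exp (-x)) < 0" by linarith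
    thus "\<exists>d. DERIV \<psi> u :> d \<and> d < 0" using d by blast
  qed
  hence "x * (1 - exp (-y)) < y * (1 - exp (-x))" by (simp add: \<psi>_def algebra_simps)
  hence "x * (1 - exp (-y)) / (x*y) < y * (1 - exp (-x)) / (x*y)"
    using assms by (intro divide_strict_right_mono) simp_all
  thus ?thesis using assms by simp
qed

lemma g_inj:
  assumes "0 < x" "0 < y" "x \<noteq> y"
  shows "(1 - exp (-y)) / y \<noteq> (1 - exp (-x)) / (x::real)"
proof
  assume eq: "(1 - exp (-y)) / y = (1 - exp (-x)) / x"
  consider "x < y" | "y < x" using assms(3) by linarith
  thus False
  proof cases
    case 1 thus False using g_strict[OF assms(1) 1] eq by simp
  next
    case 2 thus False using g_strict[OF assms(2) 2] eq by simp
  qed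
qed

lemma pos_facts:
  assumes "pos_prob_vec p"
  shows "p$0 > 0" "p$1 > 0" "p$2 > 0" "p$3 > 0" "p$0+p$1+p$2+p$3 = 1"
  using assms by (auto simp: pos_prob_vec_def sum4)

lemma key:
  assumes p: "pos_prob_vec p" and q: "pos_prob_vec q" and ne: "p$0+p$1 \<noteq> p$2+p$3"
  shows "mexp (1 *\<^sub>R hky_mat p 2 1) - mat 1 \<noteq> hky_mat q kap lam"
proof
  assume eq: "mexp (1 *\<^sub>R hky_mat p 2 1) - mat 1 = hky_mat q kap lam"
  note P = pos_facts[OF p] and Q = pos_facts[OF q]
  define s where "s = p$0+p$1"
  define t where "t = p$2+p$3"
  define e where "e = exp (-1::real)"
  have s: "s > 0" and t: "t > 0" using P by (auto simp: s_def t_def)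
  have e1: "e < 1" "e > 0" by (auto simp: e_def)
  have ee: "exp (-(1+s)) = e * exp (-s)" "exp (-(1+t)) = e * exp (-t)"
    by (simp_all add: e_def flip: exp_add)
  have M: "Fm p 1 e (e * exp (-s)) (e * exp (-t)) - mat 1 = hky_mat q kap lam"
    using eq mexp_Q[of p] P ee by (simp add: s_def t_def e_def)
  have E: "\<And>i j. (Fm p 1 e (e * exp (-s)) (e * exp (-t)) - mat 1)$i$j = hky_mat q kap lam $i$j"
    using M by simp
  have a0: "lam * q$0 = p$0 * (1 - e)" using E[of 2 0]
    by (simp add: Fm_def Pm_def Ym_def X1m_def X2m_def hky_e mat_def neq algebra_simps)
  have a1: "lam * q$1 = p$1 * (1 - e)" using E[of 2 1]
    by (simp add: Fm_def Pm_def Ym_def X1m_def X2m_def hky_e mat_def neq algebra_simps)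
  have a2: "lam * q$2 = p$2 * (1 - e)" using E[of 0 2]
    by (simp add: Fm_def Pm_def Ym_def X1m_def X2m_def hky_e mat_def neq algebra_simps)
  have a3: "lam * q$3 = p$3 * (1 - e)" using E[of 0 3]
    by (simp add: Fm_def Pm_def Ym_def X1m_def X2m_def hky_e mat_def neq algebra_simps)
  have b1: "kap * q$1 = p$1 + e * (p$1 / s - p$1) - e * exp (-s) * (p$1 / s)" using E[of 0 1]
    by (simp add: Fm_def Pm_def Ym_def X1m_def X2m_def hky_e mat_def neq s_def algebra_simps)
  have b3: "kap * q$3 = p$3 + e * (p$3 / t - p$3) - e * exp (-t) * (p$3 / t)" using E[of 2 3]
    by (simp add: Fm_def Pm_def Ym_def X1m_def X2m_def hky_e mat_def neq t_def algebra_simps)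
  have "lam * (q$0+q$1+q$2+q$3) = (1-e) * (p$0+p$1+p$2+p$3)"
    using a0 a1 a2 a3 by (simp add: algebra_simps)
  hence lam: "lam = 1 - e" using P Q by simp
  have q1: "q$1 = p$1" using a1 lam e1 by simp
  have q3: "q$3 = p$3" using a3 lam e1 by simp
  have k1: "kap = 1 + e * (1/s - 1) - e * exp (-s) / s"
  proof -
    have "kap = (kap * q$1) / p$1" using q1 P(2) by simp
    also have "\<dots> = (p$1 + e * (p$1 / s - p$1) - e * exp (-s) * (p$1 / s)) / p$1" using b1 by simp
    also have "\<dots> = 1 + e * (1/s - 1) - e * exp (-s) / s" using P(2) s by (simp add: field_simps)
    finally show ?thesis .
  qed
  have k3: "kap = 1 + e * (1/t - 1) - e * exp (-t) / t"
  proof -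
    have "kap = (kap * q$3) / p$3" using q3 P(4) by simp
    also have "\<dots> = (p$3 + e * (p$3 / t - p$3) - e * exp (-t) * (p$3 / t)) / p$3" using b3 by simp
    also have "\<dots> = 1 + e * (1/t - 1) - e * exp (-t) / t" using P(4) t by (simp add: field_simps)
    finally show ?thesis .
  qed
  have "e * ((1 - exp (-s)) / s) = kap - 1 + e"
    using k1 by (simp add: diff_divide_distrib algebra_simps)
  moreover have "e * ((1 - exp (-t)) / t) = kap - 1 + e"
    using k3 by (simp add: diff_divide_distrib algebra_simps)
  ultimately have "e * ((1 - exp (-s)) / s) = e * ((1 - exp (-t)) / t)" by simp
  hence "e = 0 \<or> (1 - exp (-s)) / s = (1 - exp (-t)) / t" by (simp only: mult_cancel_left)
  hence "(1 - exp (-s)) / s = (1 - exp (-t)) / t" using e1(2) by linarith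
  moreover have "(1 - exp (-t)) / t \<noteq> (1 - exp (-s)) / s"
    using g_inj[OF s t] ne by (simp add: s_def t_def)
  ultimately show False by simp
qed

lemma not_closed:
  assumes p: "pos_prob_vec p" and ne: "p$0+p$1 \<noteq> p$2+p$3"
  shows "\<not> closed_odot (span (HKY_plus p))"
proof
  assume c: "closed_odot (span (HKY_plus p))"
  note P = pos_facts[OF p]
  define V where "V = {M::mat4. p$3 * M$0$1 - p$1 * M$2$3 = 0}"
  have sub: "subspace V"
    by (rule subspaceI) (auto simp: V_def algebra_simps)
  have "HKY_plus p \<subseteq> V"
    by (auto simp: HKY_plus_def V_def hky_e)
  hence spV: "span (HKY_plus p) \<subseteq> V" using sub by (rule span_minimal)
  define K where "K = hky_mat p 1 0"
  have "K \<in> HKY_plus p" unfolding K_def HKY_plus_def by force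
  hence "K \<in> span (HKY_plus p)" by (rule span_base)
  hence "K ** K + K ** K \<in> V" using c spV unfolding closed_odot_def by blast
  moreover have "K ** K + K ** K \<notin> V"
  proof
    assume "K ** K + K ** K \<in> V"
    hence "p$3 * (2 * (- p$1 * (p$0+p$1))) - p$1 * (2 * (- p$3 * (p$2+p$3))) = 0"
      by (simp add: V_def K_def hky_e mm4 algebra_simps)
    hence "2 * p$1 * p$3 * ((p$2+p$3) - (p$0+p$1)) = 0" by (simp add: algebra_simps)
    thus False using P ne by simp
  qed
  ultimately show False by blast
qed

lemma not_stable:
  assumes p: "pos_prob_vec p" and ne: "p$0+p$1 \<noteq> p$2+p$3"
    and sub: "HKY_plus p \<subseteq> M" and M: "M \<subseteq> HKY_plus_all"
  shows "\<not> unif_stable M"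
proof
  assume u: "unif_stable M"
  have "hky_mat p 2 1 \<in> HKY_plus p" unfolding HKY_plus_def by force
  hence "hky_mat p 2 1 \<in> M" using sub by blast
  then have "\<forall>t::real. t \<ge> 0 \<longrightarrow> (\<exists>Q'\<in>M. mexp (t *\<^sub>R hky_mat p 2 1) - mat 1 = Q')"
    using u unfolding unif_stable_def by blast
  then have "\<exists>Q'\<in>M. mexp (1 *\<^sub>R hky_mat p 2 1) - mat 1 = Q'" by (erule_tac allE[of _ 1]) simp
  then obtain Q' where "Q' \<in> M" and Q': "mexp (1 *\<^sub>R hky_mat p 2 1) - mat 1 = Q'"
    by blast
  hence "Q' \<in> HKY_plus_all" using M by blast
  then obtain q kap lam where "pos_prob_vec q" "Q' = hky_mat q kap lam"
    unfolding HKY_plus_all_def HKY_plus_def by blast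
  thus False using key[OF p _ ne] Q' by blast
qed

theorem mainTheorem8:
  shows "(\<forall>p. pos_prob_vec p \<and> p$0 + p$1 \<noteq> p$2 + p$3 \<longrightarrow>
            \<not> closed_odot (span (HKY_plus p)) \<and> \<not> unif_stable (HKY_plus p))
         \<and> \<not> unif_stable HKY_plus_all"
proof (intro conjI allI impI)
  fix p assume h: "pos_prob_vec p \<and> p$0 + p$1 \<noteq> p$2 + p$3"
  show "\<not> closed_odot (span (HKY_plus p))" using not_closed h by blast
  have "HKY_plus p \<subseteq> HKY_plus_all" using h unfolding HKY_plus_all_def by blast
  thus "\<not> unif_stable (HKY_plus p)" using not_stable h by blast
next
  define p0 :: "real^4" where "p0 = (\<chi> i. if i \<in> {0,1} then 1/8 else 3/8)"
  have pp: "pos_prob_vec p0" by (simp add: pos_prob_vec_def p0_def sum4 neq)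
  have ne: "p0$0 + p0$1 \<noteq> p0$2 + p0$3" by (simp add: p0_def neq)
  have "HKY_plus p0 \<subseteq> HKY_plus_all" using pp unfolding HKY_plus_all_def by blast
  thus "\<not> unif_stable HKY_plus_all" using not_stable[OF pp ne] by blast
qed
end
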